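(* With notation as in the context (type $E_7$), for every $s\in\{1,3,4,5,6,7\}$: (1) $\Gamma_s^+=\mathcal{L}(z_s)\cap\bigcap_{t\in T,\ s<t\le 7}\mathcal{L}^c(z_t)$; (2) $\Gamma_s^+\oplus z_s=\mathcal{L}(z_7)\cap\bigcap_{t\in T,\ s\le t<7}\mathcal{L}^c(z_t)$, where $T=\{1,3,4,5,6,7\}$ and $\Gamma_s^+\oplus z_s=\{x\oplus z_s: x\in\Gamma_s^+\}$ (empty intersections are omitted).
   Context: Let $F=\{0,1,2,3\}$ be the group $\mathbb{Z}/2\times\mathbb{Z}/2$ with operation $\oplus$ (binary addition without carry) and symplectic form $(a|a')=0$ if $a=0$, $a'=0$ or $a=a'$, and $1$ otherwise. Let $V=F^3$ (elements written $abc$), with coordinatewise $\oplus$ and form $(abc|a'b'c')=(a|a')+(b|b')+(c|c')\in\mathbb{Z}/2$. The T-graph is the graph with vertex set $V$ in which $abc$ and $a'b'c'$ are adjacent iff exactly one of $a=a'$, $b=b'$, $c=c'$ holds. For $v\in V$, $\mathcal{L}(v)$ is the set of vertices adjacent to $v$ in the T-graph, and $\mathcal{L}^c(v)$ is the set of vertices other than $v$ not adjacent to $v$. Let $\Delta$ be the $E_7$ root system with simple roots $\alpha_1,\dots,\alpha_7$, $\langle\alpha_i,\alpha_i\rangle=2$, $\langle\alpha_i,\alpha_j\rangle=-1$ for $\{i,j\}\in\{\{1,3\},\{3,4\},\{4,5\},\{5,6\},\{6,7\},\{2,4\}\}$, $0$ otherwise; $\Lambda=\bigoplus\mathbb{Z}\alpha_i$,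 $\Delta^+$ the positive roots. Let $f:\Lambda\to V$ be the homomorphism with $f(\alpha_1)=100$, $f(\alpha_2)=030$, $f(\alpha_3)=300$, $f(\alpha_4)=111$, $f(\alpha_5)=003$, $f(\alpha_6)=001$, $f(\alpha_7)=033$. For $\beta=\sum\beta^i\alpha_i\in\Delta^+$ let $m(\beta)=\max\{i:\beta^i\ne0\}$; set $\Delta_1^+=\{\alpha_1\}$, $\Delta_3^+=\{\beta: m(\beta)\in\{2,3\}\}$, $\Delta_s^+=\{\beta: m(\beta)=s\}$ for $s=4,\dots,7$, and $\Gamma_s^+=f(\Delta_s^+)$. For $s\in\{1,3,4,5,6,7\}$ let $s'=\max\{3,s+1\}$, $\zeta_s=\sum_{i=s'}^{7}\alpha_i$ (so $\zeta_7=0$), and $z_s=f(\zeta_s)$. *)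

theory Defs
  imports Main
begin

section \<open>The group F = Z/2 x Z/2 (elements 0..3, binary addition without carry) and V = F^3\<close>

type_synonym vec = "nat \<times> nat \<times> nat"

definition Vset :: "vec set" where
  "Vset = {(a, b, c). a < 4 \<and> b < 4 \<and> c < 4}"

definition vxor :: "vec \<Rightarrow> vec \<Rightarrow> vec" where
  "vxor v w = (case v of (a, b, c) \<Rightarrow> case w of (a', b', c') \<Rightarrow>
      (Bit_Operations.xor a a', Bit_Operations.xor b b', Bit_Operations.xor c c'))"

definition tadj :: "vec \<Rightarrow> vec \<Rightarrow> bool" where
  "tadj v w = (v \<in> Vset \<and> w \<in> Vset \<and>
     (case v of (a, b, c) \<Rightarrow> case w of (a', b', c') \<Rightarrow>
        (a = a' \<and> b \<noteq> b' \<and> c \<noteq> c') \<or>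
        (a \<noteq> a' \<and> b = b' \<and> c \<noteq> c') \<or>
        (a \<noteq> a' \<and> b \<noteq> b' \<and> c = c')))"

definition Lnb :: "vec \<Rightarrow> vec set" where
  "Lnb v = {w \<in> Vset. tadj v w}"

definition Lnbc :: "vec \<Rightarrow> vec set" where
  "Lnbc v = {w \<in> Vset. w \<noteq> v \<and> \<not> tadj v w}"

section \<open>The E7 root system; elements of the root lattice are coefficient functions on 1..7\<close>

type_synonym lat = "nat \<Rightarrow> int"

definition e7_edge :: "nat \<Rightarrow> nat \<Rightarrow> bool" where
  "e7_edge i j = ({i, j} \<in> {{1,3}, {3,4}, {4,5}, {5,6}, {6,7}, {2,4}})"

definition gram :: "nat \<Rightarrow> nat \<Rightarrow> int" where
  "gram i j = (if i = j then 2 else if e7_edge i j then -1 else 0)"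

definition ip :: "lat \<Rightarrow> lat \<Rightarrow> int" where
  "ip \<beta> \<gamma> = (\<Sum>i\<in>{1..7}. \<Sum>j\<in>{1..7}. \<beta> i * \<gamma> j * gram i j)"

definition salpha :: "nat \<Rightarrow> lat" where
  "salpha i = (\<lambda>j. if j = i then 1 else 0)"

definition srefl :: "nat \<Rightarrow> lat \<Rightarrow> lat" where
  "srefl i \<beta> = (\<lambda>j. \<beta> j - ip \<beta> (salpha i) * salpha i j)"

inductive_set E7_roots :: "lat set" where
  simple: "i \<in> {1..7} \<Longrightarrow> salpha i \<in> E7_roots"
| reflect: "\<beta> \<in> E7_roots \<Longrightarrow> i \<in> {1..7} \<Longrightarrow> srefl i \<beta> \<in> E7_roots"

definition E7_pos :: "lat set" where
  "E7_pos = {\<beta> \<in> E7_roots. \<forall>j. \<beta> j \<ge> 0}"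

definition fimg :: "nat \<Rightarrow> vec" where
  "fimg i = (if i = 1 then (1,0,0) else if i = 2 then (0,3,0) else if i = 3 then (3,0,0)
     else if i = 4 then (1,1,1) else if i = 5 then (0,0,3) else if i = 6 then (0,0,1)
     else if i = 7 then (0,3,3) else (0,0,0))"

text \<open>Since V is an elementary abelian 2-group, n * x = x for odd n and 0 for even n.\<close>
definition fhom :: "lat \<Rightarrow> vec" where
  "fhom \<beta> = fold (\<lambda>i acc. vxor (if odd (\<beta> i) then fimg i else (0,0,0)) acc) [1..<8] (0,0,0)"

definition mx :: "lat \<Rightarrow> nat" where
  "mx \<beta> = Max {i. \<beta> i \<noteq> 0}"

definition Delta :: "nat \<Rightarrow> lat set" where
  "Delta s = (if s = 1 then {salpha 1}
              else if s = 3 then {\<beta> \<in> E7_pos. mx \<beta> \<in> {2, 3}}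
              else {\<beta> \<in> E7_pos. mx \<beta> = s})"

definition Gamma :: "nat \<Rightarrow> vec set" where
  "Gamma s = fhom ` Delta s"

definition sprime :: "nat \<Rightarrow> nat" where
  "sprime s = max 3 (s + 1)"

definition zeta :: "nat \<Rightarrow> lat" where
  "zeta s = (\<lambda>j. if sprime s \<le> j \<and> j \<le> 7 then 1 else 0)"

definition zs :: "nat \<Rightarrow> vec" where
  "zs s = fhom (zeta s)"

definition Tidx :: "nat set" where
  "Tidx = {1, 3, 4, 5, 6, 7}"

end

theory Submission
  imports Defs
begin

definition tofun :: "int list \<Rightarrow> lat" where
  "tofun l = (\<lambda>j. if 1 \<le> j \<and> j \<le> 7 then l ! (j - 1) else 0)"

definition gramL :: "nat \<Rightarrow> nat \<Rightarrow> int" where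
  "gramL i j = (if i = j then 2 else if (i, j) \<in> set [(1,3),(3,1),(3,4),(4,3),(4,5),(5,4),(5,6),(6,5),(6,7),(7,6),(2,4),(4,2)] then -1 else 0)"

lemma gram_eq: "gram i j = gramL i j"
  unfolding gram_def gramL_def e7_edge_def by (auto simp: doubleton_eq_iff)

definition reflL :: "nat \<Rightarrow> int list \<Rightarrow> int list" where
  "reflL i l = l[i - 1 := l ! (i - 1) - sum_list (map (\<lambda>j. l ! (j - 1) * gramL j i) [1..<8])]"

lemma ip_salpha: "i \<in> {1..7} \<Longrightarrow> ip b (salpha i) = (\<Sum>j\<in>{1..7}. b j * gram j i)"
proof -
  assume i: "i \<in> {1..7}"
  have "\<And>a. (\<Sum>j\<in>{1..7}. b a * salpha i j * gram a j) = (\<Sum>j\<in>{1..7}. if j = i then b a * gram a j else 0)"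
    by (rule sum.cong) (auto simp: salpha_def)
  then show ?thesis using i unfolding ip_def by (simp add: gram_def e7_edge_def insert_commute)
qed

lemma sum_tofun: "(\<Sum>j\<in>{1..7}. tofun l j * gram j i) = sum_list (map (\<lambda>j. l ! (j - 1) * gramL j i) [1..<8])"
proof -
  have "(\<Sum>j\<in>{1..7}. tofun l j * gram j i) = (\<Sum>j\<in>{1..<8}. l ! (j - 1) * gramL j i)"
    by (rule sum.cong) (auto simp: tofun_def gram_eq)
  also have "\<dots> = sum_list (map (\<lambda>j. l ! (j - 1) * gramL j i) [1..<8])"
    by (simp add: sum_list_distinct_conv_sum_set)
  finally show ?thesis .
qed

lemma srefl_tofun:
  assumes "length l = 7" "i \<in> {1..7}"
  shows "srefl i (tofun l) = tofun (reflL i l)"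
proof
  fix j
  show "srefl i (tofun l) j = tofun (reflL i l) j"
    using assms unfolding srefl_def ip_salpha[OF assms(2)] sum_tofun
    by (auto simp: reflL_def tofun_def salpha_def nth_list_update)
qed

lemma step_in:
  assumes "tofun l \<in> E7_roots" "length l = 7" "i \<in> {1..7}"
  shows "tofun (reflL i l) \<in> E7_roots"
  using E7_roots.reflect[OF assms(1) assms(3)] srefl_tofun[OF assms(2,3)] by simp

lemma simple_in:
  assumes "i \<in> {1..7}"
  shows "tofun (map (\<lambda>j. if j = i then 1 else 0) [1..<8]) \<in> E7_roots"
proof -
  have "salpha i = tofun (map (\<lambda>j. if j = i then 1 else 0) [1..<8])"
  proof
    fix j show "salpha i j = tofun (map (\<lambda>j. if j = i then 1 else 0) [1..<8]) j"
      by (cases "1 \<le> j \<and> j \<le> 7") (use assms in \<open>auto simp: salpha_def tofun_def nth_map\<close>)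
  qed
  then show ?thesis using E7_roots.simple[OF assms] by simp
qed

definition R126 :: "int list list" where "R126 = [[-2,-2,-3,-4,-3,-2,-1],
  [-1,-2,-3,-4,-3,-2,-1],
  [-1,-2,-2,-4,-3,-2,-1],
  [-1,-2,-2,-3,-3,-2,-1],
  [-1,-2,-2,-3,-2,-2,-1],
  [-1,-2,-2,-3,-2,-1,-1],
  [-1,-2,-2,-3,-2,-1,0],
  [-1,-1,-2,-3,-3,-2,-1],
  [-1,-1,-2,-3,-2,-2,-1],
  [-1,-1,-2,-3,-2,-1,-1],
  [-1,-1,-2,-3,-2,-1,0],
  [-1,-1,-2,-2,-2,-2,-1],
  [-1,-1,-2,-2,-2,-1,-1],
  [-1,-1,-2,-2,-2,-1,0],
  [-1,-1,-2,-2,-1,-1,-1],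
  [-1,-1,-2,-2,-1,-1,0],
  [-1,-1,-2,-2,-1,0,0],
  [-1,-1,-1,-2,-2,-2,-1],
  [-1,-1,-1,-2,-2,-1,-1],
  [-1,-1,-1,-2,-2,-1,0],
  [-1,-1,-1,-2,-1,-1,-1],
  [-1,-1,-1,-2,-1,-1,0],
  [-1,-1,-1,-2,-1,0,0],
  [-1,-1,-1,-1,-1,-1,-1],
  [-1,-1,-1,-1,-1,-1,0],
  [-1,-1,-1,-1,-1,0,0],
  [-1,-1,-1,-1,0,0,0],
  [-1,0,-1,-1,-1,-1,-1],
  [-1,0,-1,-1,-1,-1,0],
  [-1,0,-1,-1,-1,0,0],
  [-1,0,-1,-1,0,0,0],
  [-1,0,-1,0,0,0,0],
  [-1,0,0,0,0,0,0],
  [0,-1,-1,-2,-2,-2,-1],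
  [0,-1,-1,-2,-2,-1,-1],
  [0,-1,-1,-2,-2,-1,0],
  [0,-1,-1,-2,-1,-1,-1],
  [0,-1,-1,-2,-1,-1,0],
  [0,-1,-1,-2,-1,0,0],
  [0,-1,-1,-1,-1,-1,-1],
  [0,-1,-1,-1,-1,-1,0],
  [0,-1,-1,-1,-1,0,0],
  [0,-1,-1,-1,0,0,0],
  [0,-1,0,-1,-1,-1,-1],
  [0,-1,0,-1,-1,-1,0],
  [0,-1,0,-1,-1,0,0],
  [0,-1,0,-1,0,0,0],
  [0,-1,0,0,0,0,0],
  [0,0,-1,-1,-1,-1,-1],
  [0,0,-1,-1,-1,-1,0],
  [0,0,-1,-1,-1,0,0],
  [0,0,-1,-1,0,0,0],
  [0,0,-1,0,0,0,0],
  [0,0,0,-1,-1,-1,-1],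
  [0,0,0,-1,-1,-1,0],
  [0,0,0,-1,-1,0,0],
  [0,0,0,-1,0,0,0],
  [0,0,0,0,-1,-1,-1],
  [0,0,0,0,-1,-1,0],
  [0,0,0,0,-1,0,0],
  [0,0,0,0,0,-1,-1],
  [0,0,0,0,0,-1,0],
  [0,0,0,0,0,0,-1],
  [0,0,0,0,0,0,1],
  [0,0,0,0,0,1,0],
  [0,0,0,0,0,1,1],
  [0,0,0,0,1,0,0],
  [0,0,0,0,1,1,0],
  [0,0,0,0,1,1,1],
  [0,0,0,1,0,0,0],
  [0,0,0,1,1,0,0],
  [0,0,0,1,1,1,0],
  [0,0,0,1,1,1,1],
  [0,0,1,0,0,0,0],
  [0,0,1,1,0,0,0],
  [0,0,1,1,1,0,0],
  [0,0,1,1,1,1,0],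
  [0,0,1,1,1,1,1],
  [0,1,0,0,0,0,0],
  [0,1,0,1,0,0,0],
  [0,1,0,1,1,0,0],
  [0,1,0,1,1,1,0],
  [0,1,0,1,1,1,1],
  [0,1,1,1,0,0,0],
  [0,1,1,1,1,0,0],
  [0,1,1,1,1,1,0],
  [0,1,1,1,1,1,1],
  [0,1,1,2,1,0,0],
  [0,1,1,2,1,1,0],
  [0,1,1,2,1,1,1],
  [0,1,1,2,2,1,0],
  [0,1,1,2,2,1,1],
  [0,1,1,2,2,2,1],
  [1,0,0,0,0,0,0],
  [1,0,1,0,0,0,0],
  [1,0,1,1,0,0,0],
  [1,0,1,1,1,0,0],
  [1,0,1,1,1,1,0],
  [1,0,1,1,1,1,1],
  [1,1,1,1,0,0,0],
  [1,1,1,1,1,0,0],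
  [1,1,1,1,1,1,0],
  [1,1,1,1,1,1,1],
  [1,1,1,2,1,0,0],
  [1,1,1,2,1,1,0],
  [1,1,1,2,1,1,1],
  [1,1,1,2,2,1,0],
  [1,1,1,2,2,1,1],
  [1,1,1,2,2,2,1],
  [1,1,2,2,1,0,0],
  [1,1,2,2,1,1,0],
  [1,1,2,2,1,1,1],
  [1,1,2,2,2,1,0],
  [1,1,2,2,2,1,1],
  [1,1,2,2,2,2,1],
  [1,1,2,3,2,1,0],
  [1,1,2,3,2,1,1],
  [1,1,2,3,2,2,1],
  [1,1,2,3,3,2,1],
  [1,2,2,3,2,1,0],
  [1,2,2,3,2,1,1],
  [1,2,2,3,2,2,1],
  [1,2,2,3,3,2,1],
  [1,2,2,4,3,2,1],
  [1,2,3,4,3,2,1],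
  [2,2,3,4,3,2,1]]"

definition PosL :: "int list list" where "PosL = [[0,0,0,0,0,0,1],
  [0,0,0,0,0,1,0],
  [0,0,0,0,0,1,1],
  [0,0,0,0,1,0,0],
  [0,0,0,0,1,1,0],
  [0,0,0,0,1,1,1],
  [0,0,0,1,0,0,0],
  [0,0,0,1,1,0,0],
  [0,0,0,1,1,1,0],
  [0,0,0,1,1,1,1],
  [0,0,1,0,0,0,0],
  [0,0,1,1,0,0,0],
  [0,0,1,1,1,0,0],
  [0,0,1,1,1,1,0],
  [0,0,1,1,1,1,1],
  [0,1,0,0,0,0,0],
  [0,1,0,1,0,0,0],
  [0,1,0,1,1,0,0],
  [0,1,0,1,1,1,0],
  [0,1,0,1,1,1,1],
  [0,1,1,1,0,0,0],
  [0,1,1,1,1,0,0],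
  [0,1,1,1,1,1,0],
  [0,1,1,1,1,1,1],
  [0,1,1,2,1,0,0],
  [0,1,1,2,1,1,0],
  [0,1,1,2,1,1,1],
  [0,1,1,2,2,1,0],
  [0,1,1,2,2,1,1],
  [0,1,1,2,2,2,1],
  [1,0,0,0,0,0,0],
  [1,0,1,0,0,0,0],
  [1,0,1,1,0,0,0],
  [1,0,1,1,1,0,0],
  [1,0,1,1,1,1,0],
  [1,0,1,1,1,1,1],
  [1,1,1,1,0,0,0],
  [1,1,1,1,1,0,0],
  [1,1,1,1,1,1,0],
  [1,1,1,1,1,1,1],
  [1,1,1,2,1,0,0],
  [1,1,1,2,1,1,0],
  [1,1,1,2,1,1,1],
  [1,1,1,2,2,1,0],
  [1,1,1,2,2,1,1],
  [1,1,1,2,2,2,1],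
  [1,1,2,2,1,0,0],
  [1,1,2,2,1,1,0],
  [1,1,2,2,1,1,1],
  [1,1,2,2,2,1,0],
  [1,1,2,2,2,1,1],
  [1,1,2,2,2,2,1],
  [1,1,2,3,2,1,0],
  [1,1,2,3,2,1,1],
  [1,1,2,3,2,2,1],
  [1,1,2,3,3,2,1],
  [1,2,2,3,2,1,0],
  [1,2,2,3,2,1,1],
  [1,2,2,3,2,2,1],
  [1,2,2,3,3,2,1],
  [1,2,2,4,3,2,1],
  [1,2,3,4,3,2,1],
  [2,2,3,4,3,2,1]]"

lemma pos_in: "\<forall>l \<in> set PosL. tofun l \<in> E7_roots"
proof -
  have r0: "tofun [0,0,0,0,0,0,1] \<in> E7_roots" using simple_in[of 7] by (simp add: upt_rec)
  have r1: "tofun [0,0,0,0,0,1,0] \<in> E7_roots" using simple_in[of 6] by (simp add: upt_rec)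
  have r2: "tofun [0,0,0,0,1,0,0] \<in> E7_roots" using simple_in[of 5] by (simp add: upt_rec)
  have r3: "tofun [0,0,0,1,0,0,0] \<in> E7_roots" using simple_in[of 4] by (simp add: upt_rec)
  have r4: "tofun [0,0,1,0,0,0,0] \<in> E7_roots" using simple_in[of 3] by (simp add: upt_rec)
  have r5: "tofun [0,1,0,0,0,0,0] \<in> E7_roots" using simple_in[of 2] by (simp add: upt_rec)
  have r6: "tofun [1,0,0,0,0,0,0] \<in> E7_roots" using simple_in[of 1] by (simp add: upt_rec)
  have r7: "tofun [0,0,0,0,0,1,1] \<in> E7_roots" using step_in[OF r0, of 6] by (simp add: reflL_def gramL_def upt_rec)
  have r8: "tofun [0,0,0,0,1,1,0] \<in> E7_roots" using step_in[OF r1, of 5] by (simp add: reflL_def gramL_def upt_rec)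
  have r9: "tofun [0,0,0,1,1,0,0] \<in> E7_roots" using step_in[OF r2, of 4] by (simp add: reflL_def gramL_def upt_rec)
  have r10: "tofun [0,0,1,1,0,0,0] \<in> E7_roots" using step_in[OF r3, of 3] by (simp add: reflL_def gramL_def upt_rec)
  have r11: "tofun [0,1,0,1,0,0,0] \<in> E7_roots" using step_in[OF r3, of 2] by (simp add: reflL_def gramL_def upt_rec)
  have r12: "tofun [1,0,1,0,0,0,0] \<in> E7_roots" using step_in[OF r4, of 1] by (simp add: reflL_def gramL_def upt_rec)
  have r13: "tofun [0,0,0,0,1,1,1] \<in> E7_roots" using step_in[OF r7, of 5] by (simp add: reflL_def gramL_def upt_rec)
  have r14: "tofun [0,0,0,1,1,1,0] \<in> E7_roots" using step_in[OF r8, of 4] by (simp add: reflL_def gramL_def upt_rec)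
  have r15: "tofun [0,0,1,1,1,0,0] \<in> E7_roots" using step_in[OF r9, of 3] by (simp add: reflL_def gramL_def upt_rec)
  have r16: "tofun [0,1,0,1,1,0,0] \<in> E7_roots" using step_in[OF r9, of 2] by (simp add: reflL_def gramL_def upt_rec)
  have r17: "tofun [0,1,1,1,0,0,0] \<in> E7_roots" using step_in[OF r10, of 2] by (simp add: reflL_def gramL_def upt_rec)
  have r18: "tofun [1,0,1,1,0,0,0] \<in> E7_roots" using step_in[OF r10, of 1] by (simp add: reflL_def gramL_def upt_rec)
  have r19: "tofun [0,0,0,1,1,1,1] \<in> E7_roots" using step_in[OF r13, of 4] by (simp add: reflL_def gramL_def upt_rec)
  have r20: "tofun [0,0,1,1,1,1,0] \<in> E7_roots" using step_in[OF r14, of 3] by (simp add: reflL_def gramL_def upt_rec)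
  have r21: "tofun [0,1,0,1,1,1,0] \<in> E7_roots" using step_in[OF r14, of 2] by (simp add: reflL_def gramL_def upt_rec)
  have r22: "tofun [0,1,1,1,1,0,0] \<in> E7_roots" using step_in[OF r15, of 2] by (simp add: reflL_def gramL_def upt_rec)
  have r23: "tofun [1,0,1,1,1,0,0] \<in> E7_roots" using step_in[OF r15, of 1] by (simp add: reflL_def gramL_def upt_rec)
  have r24: "tofun [1,1,1,1,0,0,0] \<in> E7_roots" using step_in[OF r17, of 1] by (simp add: reflL_def gramL_def upt_rec)
  have r25: "tofun [0,0,1,1,1,1,1] \<in> E7_roots" using step_in[OF r19, of 3] by (simp add: reflL_def gramL_def upt_rec)
  have r26: "tofun [0,1,0,1,1,1,1] \<in> E7_roots" using step_in[OF r19, of 2] by (simp add: reflL_def gramL_def upt_rec)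
  have r27: "tofun [0,1,1,1,1,1,0] \<in> E7_roots" using step_in[OF r20, of 2] by (simp add: reflL_def gramL_def upt_rec)
  have r28: "tofun [0,1,1,2,1,0,0] \<in> E7_roots" using step_in[OF r22, of 4] by (simp add: reflL_def gramL_def upt_rec)
  have r29: "tofun [1,0,1,1,1,1,0] \<in> E7_roots" using step_in[OF r20, of 1] by (simp add: reflL_def gramL_def upt_rec)
  have r30: "tofun [1,1,1,1,1,0,0] \<in> E7_roots" using step_in[OF r22, of 1] by (simp add: reflL_def gramL_def upt_rec)
  have r31: "tofun [0,1,1,1,1,1,1] \<in> E7_roots" using step_in[OF r25, of 2] by (simp add: reflL_def gramL_def upt_rec)
  have r32: "tofun [0,1,1,2,1,1,0] \<in> E7_roots" using step_in[OF r27, of 4] by (simp add: reflL_def gramL_def upt_rec)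
  have r33: "tofun [1,0,1,1,1,1,1] \<in> E7_roots" using step_in[OF r25, of 1] by (simp add: reflL_def gramL_def upt_rec)
  have r34: "tofun [1,1,1,1,1,1,0] \<in> E7_roots" using step_in[OF r27, of 1] by (simp add: reflL_def gramL_def upt_rec)
  have r35: "tofun [1,1,1,2,1,0,0] \<in> E7_roots" using step_in[OF r28, of 1] by (simp add: reflL_def gramL_def upt_rec)
  have r36: "tofun [0,1,1,2,1,1,1] \<in> E7_roots" using step_in[OF r31, of 4] by (simp add: reflL_def gramL_def upt_rec)
  have r37: "tofun [0,1,1,2,2,1,0] \<in> E7_roots" using step_in[OF r32, of 5] by (simp add: reflL_def gramL_def upt_rec)
  have r38: "tofun [1,1,1,1,1,1,1] \<in> E7_roots" using step_in[OF r31, of 1] by (simp add: reflL_def gramL_def upt_rec)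
  have r39: "tofun [1,1,1,2,1,1,0] \<in> E7_roots" using step_in[OF r32, of 1] by (simp add: reflL_def gramL_def upt_rec)
  have r40: "tofun [1,1,2,2,1,0,0] \<in> E7_roots" using step_in[OF r35, of 3] by (simp add: reflL_def gramL_def upt_rec)
  have r41: "tofun [0,1,1,2,2,1,1] \<in> E7_roots" using step_in[OF r36, of 5] by (simp add: reflL_def gramL_def upt_rec)
  have r42: "tofun [1,1,1,2,1,1,1] \<in> E7_roots" using step_in[OF r36, of 1] by (simp add: reflL_def gramL_def upt_rec)
  have r43: "tofun [1,1,1,2,2,1,0] \<in> E7_roots" using step_in[OF r37, of 1] by (simp add: reflL_def gramL_def upt_rec)
  have r44: "tofun [1,1,2,2,1,1,0] \<in> E7_roots" using step_in[OF r39, of 3] by (simp add: reflL_def gramL_def upt_rec)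
  have r45: "tofun [0,1,1,2,2,2,1] \<in> E7_roots" using step_in[OF r41, of 6] by (simp add: reflL_def gramL_def upt_rec)
  have r46: "tofun [1,1,1,2,2,1,1] \<in> E7_roots" using step_in[OF r41, of 1] by (simp add: reflL_def gramL_def upt_rec)
  have r47: "tofun [1,1,2,2,1,1,1] \<in> E7_roots" using step_in[OF r42, of 3] by (simp add: reflL_def gramL_def upt_rec)
  have r48: "tofun [1,1,2,2,2,1,0] \<in> E7_roots" using step_in[OF r43, of 3] by (simp add: reflL_def gramL_def upt_rec)
  have r49: "tofun [1,1,1,2,2,2,1] \<in> E7_roots" using step_in[OF r45, of 1] by (simp add: reflL_def gramL_def upt_rec)
  have r50: "tofun [1,1,2,2,2,1,1] \<in> E7_roots" using step_in[OF r46, of 3] by (simp add: reflL_def gramL_def upt_rec)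
  have r51: "tofun [1,1,2,3,2,1,0] \<in> E7_roots" using step_in[OF r48, of 4] by (simp add: reflL_def gramL_def upt_rec)
  have r52: "tofun [1,1,2,2,2,2,1] \<in> E7_roots" using step_in[OF r49, of 3] by (simp add: reflL_def gramL_def upt_rec)
  have r53: "tofun [1,1,2,3,2,1,1] \<in> E7_roots" using step_in[OF r50, of 4] by (simp add: reflL_def gramL_def upt_rec)
  have r54: "tofun [1,2,2,3,2,1,0] \<in> E7_roots" using step_in[OF r51, of 2] by (simp add: reflL_def gramL_def upt_rec)
  have r55: "tofun [1,1,2,3,2,2,1] \<in> E7_roots" using step_in[OF r52, of 4] by (simp add: reflL_def gramL_def upt_rec)
  have r56: "tofun [1,2,2,3,2,1,1] \<in> E7_roots" using step_in[OF r53, of 2] by (simp add: reflL_def gramL_def upt_rec)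
  have r57: "tofun [1,1,2,3,3,2,1] \<in> E7_roots" using step_in[OF r55, of 5] by (simp add: reflL_def gramL_def upt_rec)
  have r58: "tofun [1,2,2,3,2,2,1] \<in> E7_roots" using step_in[OF r55, of 2] by (simp add: reflL_def gramL_def upt_rec)
  have r59: "tofun [1,2,2,3,3,2,1] \<in> E7_roots" using step_in[OF r57, of 2] by (simp add: reflL_def gramL_def upt_rec)
  have r60: "tofun [1,2,2,4,3,2,1] \<in> E7_roots" using step_in[OF r59, of 4] by (simp add: reflL_def gramL_def upt_rec)
  have r61: "tofun [1,2,3,4,3,2,1] \<in> E7_roots" using step_in[OF r60, of 3] by (simp add: reflL_def gramL_def upt_rec)
  have r62: "tofun [2,2,3,4,3,2,1] \<in> E7_roots" using step_in[OF r61, of 1] by (simp add: reflL_def gramL_def upt_rec)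
  show ?thesis unfolding PosL_def using r0 r1 r2 r3 r4 r5 r6 r7 r8 r9 r10 r11 r12 r13 r14 r15 r16 r17 r18 r19 r20 r21 r22 r23 r24 r25 r26 r27 r28 r29 r30 r31 r32 r33 r34 r35 r36 r37 r38 r39 r40 r41 r42 r43 r44 r45 r46 r47 r48 r49 r50 r51 r52 r53 r54 r55 r56 r57 r58 r59 r60 r61 r62 by simp
qed

lemma R126_facts:
  "\<forall>l\<in>set R126. length l = 7"
  "\<forall>l\<in>set R126. \<forall>i\<in>set [1..<8]. reflL i l \<in> set R126"
  "\<forall>i\<in>set [1..<8]. map (\<lambda>j. if j = i then 1 else 0) [1..<8] \<in> set R126"
  "filter (list_all (\<lambda>x. 0 \<le> x)) R126 = PosL"
  by code_simp+

lemma roots_sub: "b \<in> E7_roots \<Longrightarrow> \<exists>l\<in>set R126. b = tofun l"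
proof (induction rule: E7_roots.induct)
  case (simple i)
  have "salpha i = tofun (map (\<lambda>j. if j = i then 1 else 0) [1..<8])"
  proof
    fix j show "salpha i j = tofun (map (\<lambda>j. if j = i then 1 else 0) [1..<8]) j"
      by (cases "1 \<le> j \<and> j \<le> 7") (use simple in \<open>auto simp: salpha_def tofun_def nth_map\<close>)
  qed
  moreover have "map (\<lambda>j. if j = i then 1 else 0) [1..<8] \<in> set R126"
    using R126_facts(3) simple by auto
  ultimately show ?case by blast
next
  case (reflect b i)
  then obtain l where l: "l \<in> set R126" "b = tofun l" by blast
  have len: "length l = 7" using R126_facts(1) l by auto
  have "reflL i l \<in> set R126" using R126_facts(2) l reflect by auto
  then show ?case using srefl_tofun[OF len \<open>i \<in> {1..7}\<close>] l by blast
qed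

lemma tofun_nonneg: "length l = 7 \<Longrightarrow> (\<forall>j. 0 \<le> tofun l j) \<longleftrightarrow> list_all (\<lambda>x. 0 \<le> x) l"
proof
  assume "length l = 7" "\<forall>j. 0 \<le> tofun l j"
  then show "list_all (\<lambda>x. 0 \<le> x) l"
    unfolding list_all_length
  proof (intro allI impI)
    fix n assume "length l = 7" "\<forall>j. 0 \<le> tofun l j" "n < length l"
    then have "0 \<le> tofun l (n + 1)" by blast
    then show "0 \<le> l ! n" using \<open>n < length l\<close> \<open>length l = 7\<close> by (simp add: tofun_def)
  qed
next
  assume "length l = 7" "list_all (\<lambda>x. 0 \<le> x) l"
  then show "\<forall>j. 0 \<le> tofun l j" by (auto simp: tofun_def list_all_length)
qed

lemma E7_pos_eq: "E7_pos = tofun ` set PosL"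
proof
  show "E7_pos \<subseteq> tofun ` set PosL"
  proof
    fix b assume "b \<in> E7_pos"
    then have b: "b \<in> E7_roots" "\<forall>j. 0 \<le> b j" unfolding E7_pos_def by auto
    then obtain l where l: "l \<in> set R126" "b = tofun l" using roots_sub by blast
    have "length l = 7" using R126_facts(1) l by auto
    then have "list_all (\<lambda>x. 0 \<le> x) l" using tofun_nonneg b l by blast
    then have "l \<in> set (filter (list_all (\<lambda>x. 0 \<le> x)) R126)" using l by simp
    then have "l \<in> set PosL" using R126_facts(4) by simp
    then show "b \<in> tofun ` set PosL" using l by blast
  qed
next
  show "tofun ` set PosL \<subseteq> E7_pos"
  proof
    fix b assume "b \<in> tofun ` set PosL"
    then obtain l where l: "l \<in> set PosL" "b = tofun l" by blast
    have "l \<in> set (filter (list_all (\<lambda>x. 0 \<le> x)) R126)" using l(1) R126_facts(4) by simp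
    then have "l \<in> set R126" "list_all (\<lambda>x. 0 \<le> x) l" by auto
    then have "length l = 7" "\<forall>j. 0 \<le> tofun l j" using R126_facts(1) tofun_nonneg by auto
    then show "b \<in> E7_pos" using pos_in l unfolding E7_pos_def by auto
  qed
qed

definition mxl :: "int list \<Rightarrow> nat" where
  "mxl l = Max (set (filter (\<lambda>i. l ! (i - 1) \<noteq> 0) [1..<8]))"

lemma mx_tofun: "mx (tofun l) = mxl l"
proof -
  have "{i. tofun l i \<noteq> 0} = set (filter (\<lambda>i. l ! (i - 1) \<noteq> 0) [1..<8])"
    by (auto simp: tofun_def)
  then show ?thesis unfolding mx_def mxl_def by simp
qed

definition DL :: "nat \<Rightarrow> int list list" where
  "DL s = (if s = 1 then [[1,0,0,0,0,0,0]]
     else if s = 3 then filter (\<lambda>l. mxl l \<in> {2, 3}) PosL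
     else filter (\<lambda>l. mxl l = s) PosL)"

lemma Delta_eq: "Delta s = tofun ` set (DL s)"
proof -
  have "salpha 1 = tofun [1,0,0,0,0,0,0]"
  proof
    fix j show "salpha 1 j = tofun [1,0,0,0,0,0,0] j"
      by (cases "j = 1 \<or> j = 2 \<or> j = 3 \<or> j = 4 \<or> j = 5 \<or> j = 6 \<or> j = 7")
        (auto simp: salpha_def tofun_def)
  qed
  then show ?thesis
    unfolding Delta_def DL_def E7_pos_eq by (auto simp: mx_tofun)
qed

definition fhomL :: "int list \<Rightarrow> vec" where
  "fhomL l = fold (\<lambda>i acc. vxor (if odd (l ! (i - 1)) then fimg i else (0,0,0)) acc) [1..<8] (0,0,0)"

lemma fhom_tofun: "fhom (tofun l) = fhomL l"
  unfolding fhom_def fhomL_def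
  by (rule fold_cong) (auto simp: tofun_def)

lemma Gamma_eq: "Gamma s = set (map fhomL (DL s))"
  unfolding Gamma_def Delta_eq by (simp add: image_image fhom_tofun)

definition zetaL :: "nat \<Rightarrow> int list" where
  "zetaL s = map (\<lambda>j. if sprime s \<le> j \<and> j \<le> 7 then 1 else 0) [1..<8]"

lemma zs_eq: "zs s = fhomL (zetaL s)"
proof -
  have "zeta s = tofun (zetaL s)"
  proof
    fix j show "zeta s j = tofun (zetaL s) j"
      by (cases "1 \<le> j \<and> j \<le> 7") (auto simp: zeta_def tofun_def zetaL_def nth_map sprime_def)
  qed
  then show ?thesis unfolding zs_def by (simp add: fhom_tofun)
qed

definition Vlist :: "vec list" where
  "Vlist = List.product [0..<4] (List.product [0..<4] [0..<4])"

lemma Vset_eq: "Vset = set Vlist"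
  unfolding Vset_def Vlist_def by auto

definition tadjL :: "vec \<Rightarrow> vec \<Rightarrow> bool" where
  "tadjL v w = (v \<in> set Vlist \<and> w \<in> set Vlist \<and>
     (case v of (a, b, c) \<Rightarrow> case w of (a', b', c') \<Rightarrow>
        (a = a' \<and> b \<noteq> b' \<and> c \<noteq> c') \<or>
        (a \<noteq> a' \<and> b = b' \<and> c \<noteq> c') \<or>
        (a \<noteq> a' \<and> b \<noteq> b' \<and> c = c')))"

lemma tadj_eq: "tadj = tadjL"
  unfolding tadj_def tadjL_def Vset_eq by (intro ext) simp

lemma inter_form:
  "Lnb v \<inter> (\<Inter>t \<in> T. Lnbc (g t)) =
     set (filter (\<lambda>w. tadjL v w \<and> (\<forall>t\<in>T. w \<noteq> g t \<and> \<not> tadjL (g t) w)) Vlist)"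
  unfolding Lnb_def Lnbc_def Vset_eq tadj_eq by auto

lemma Tidx_filter: "{t \<in> Tidx. P t} = set (filter P [1,3,4,5,6,7])"
  unfolding Tidx_def by auto

lemma check:
  "\<forall>s\<in>set [1,3,4,5,6,7::nat].
     set (map fhomL (DL s)) = set (filter (\<lambda>w. tadjL (fhomL (zetaL s)) w \<and>
        (\<forall>t\<in>set (filter (\<lambda>t. s < t \<and> t \<le> 7) [1,3,4,5,6,7]).
            w \<noteq> fhomL (zetaL t) \<and> \<not> tadjL (fhomL (zetaL t)) w)) Vlist) \<and>
     set (map (\<lambda>x. vxor x (fhomL (zetaL s))) (map fhomL (DL s))) =
       set (filter (\<lambda>w. tadjL (fhomL (zetaL 7)) w \<and>
        (\<forall>t\<in>set (filter (\<lambda>t. s \<le> t \<and> t < 7) [1,3,4,5,6,7]).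
            w \<noteq> fhomL (zetaL t) \<and> \<not> tadjL (fhomL (zetaL t)) w)) Vlist)"
  by code_simp

theorem mainTheorem8:
  shows "\<forall>s \<in> Tidx.
     Gamma s = Lnb (zs s) \<inter> (\<Inter>t \<in> {t \<in> Tidx. s < t \<and> t \<le> 7}. Lnbc (zs t)) \<and>
     (\<lambda>x. vxor x (zs s)) ` Gamma s = Lnb (zs 7) \<inter> (\<Inter>t \<in> {t \<in> Tidx. s \<le> t \<and> t < 7}. Lnbc (zs t))"
proof
  fix s assume s: "s \<in> Tidx"
  then have s': "s \<in> set [1,3,4,5,6,7::nat]" unfolding Tidx_def by simp
  show "Gamma s = Lnb (zs s) \<inter> (\<Inter>t \<in> {t \<in> Tidx. s < t \<and> t \<le> 7}. Lnbc (zs t)) \<and>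
     (\<lambda>x. vxor x (zs s)) ` Gamma s = Lnb (zs 7) \<inter> (\<Inter>t \<in> {t \<in> Tidx. s \<le> t \<and> t < 7}. Lnbc (zs t))"
    unfolding inter_form Tidx_filter Gamma_eq zs_eq
    using check s' unfolding set_map by blast
qed

end
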